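(* Let $D>0$, $\beta=1$, $-1<\nu<1$, $\alpha>0$, and let the inelastic curvature be isotropic: $\bar{\mathbf k}=(\bar k,\bar k,0)^\top$ with $\bar k>0$. Consider the minimization of $\mathcal E(\mathbf k)=\tfrac12\mathbf D(\mathbf k-\bar{\mathbf k})\cdot(\mathbf k-\bar{\mathbf k})$ over $\{\mathbf k\in\mathbb R^3:\det\mathbf k=0\}$. Then the set of local minimizers coincides with the set of global minimizers, and it is: (i) if $\alpha>1$: exactly the two points $\mathbf k=((1+\nu)\bar k,0,0)^\top$ and $\mathbf k=(0,(1+\nu)\bar k,0)^\top$, i.e. the cylindrical configurations $(1+\nu)\bar k\,\mathbf e(\varphi)\otimes\mathbf e(\varphi)$ with $\varphi\in\{0,\pi/2\}$; (ii) if $\alpha<1$: exactly the two points $\mathbf k=(c,c,2c)^\top$ and $\mathbf k=(c,c,-2c)^\top$ with $c=\dfrac{(1+\nu)\bar k}{1+\nu+\alpha-\alpha\nu}$, i.e. the cylindrical configurations $2c\,\mathbf e(\varphi)\otimes\mathbf e(\varphi)$ with $\varphi=\pm\pi/4$; (iii) if $\alpha=1$: the whole one-parameter family $\{(1+\nu)\bar k\,(\cos^2\varphi,\sin^2\varphi,2\sin\varphi\cos\varphi)^\top:\ \varphi\in[0,\pi)\}$, i.e. all cylindrical configurations $(1+\nu)\bar k\,\mathbf e(\varphi)\otimes\mathbf e(\varphi)$, which all have the same energy (neutral stability). Moreover, in the coordinates $\boldsymbol\kappa=\kappa_m(1,a\cos\theta,b\sin\theta)$ with $\kappa_m$ eliminated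 through its optimal value, the reduced energy $\tilde U(\theta)=\min_{\kappa_m}\tfrac12\|\boldsymbol\kappa-T\bar{\mathbf k}\|^2$ satisfies $\tilde U'(\theta)=\dfrac{\bar\kappa_m^2(b^2-a^2)\sin2\theta}{2(a^2\cos^2\theta+b^2\sin^2\theta+1)^2}$ with $\bar\kappa_m=\sqrt{1+\nu}\,\bar k$.
   Context: Curvature tensors are Voigt vectors $\mathbf k=(k_{11},k_{22},2k_{12})^\top$, $\det\mathbf k=k_{11}k_{22}-k_{12}^2$, $\mathbf e(\varphi)=(\cos\varphi,\sin\varphi)$. The bending stiffness matrix is $\mathbf D=D\begin{pmatrix}1&\nu&0\\ \nu&\beta&0\\ 0&0&\alpha\frac{1-\nu}{2}\end{pmatrix}$. The map $T$: $\kappa_m=\sqrt{1+\nu/\sqrt\beta}\,\frac{k_{11}+\sqrt\beta\,k_{22}}{2}$, $\kappa_d=\sqrt{1-\nu/\sqrt\beta}\,\frac{\sqrt\beta\,k_{22}-k_{11}}{2}$, $\kappa_t=\sqrt{(1-\nu)\alpha}\,k_{12}$; $a=\sqrt{\frac{\sqrt\beta-\nu}{\sqrt\beta+\nu}}$, $b=\sqrt{\alpha\frac{1-\nu}{\sqrt\beta+\nu}}$ (for $\beta=1$: $a=\sqrt{(1-\nu)/(1+\nu)}$, $b=\sqrt\alpha\,a$). *)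

theory Defs
  imports "HOL-Analysis.Analysis"
begin

text \<open>Curvatures are Voigt vectors (k11, k22, 2 k12), represented as real \<times> real \<times> real
  (with the Euclidean norm of the product type).\<close>

type_synonym voigt = "real \<times> real \<times> real"

definition detV :: "voigt \<Rightarrow> real" where
  "detV k = fst k * fst (snd k) - (snd (snd k) / 2)^2"

definition stiff :: "real \<Rightarrow> real \<Rightarrow> real \<Rightarrow> real \<Rightarrow> voigt \<Rightarrow> voigt" where
  "stiff D \<nu> \<beta> \<alpha> k =
     (D * (fst k + \<nu> * fst (snd k)),
      D * (\<nu> * fst k + \<beta> * fst (snd k)),
      D * (\<alpha> * (1 - \<nu>) / 2) * snd (snd k))"

definition energy :: "real \<Rightarrow> real \<Rightarrow> real \<Rightarrow> real \<Rightarrow> voigt \<Rightarrow> voigt \<Rightarrow> real" where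
  "energy D \<nu> \<beta> \<alpha> kbar k = 1/2 * inner (stiff D \<nu> \<beta> \<alpha> (k - kbar)) (k - kbar)"

definition local_min_on :: "(voigt \<Rightarrow> real) \<Rightarrow> voigt set \<Rightarrow> voigt \<Rightarrow> bool" where
  "local_min_on f S x \<longleftrightarrow> x \<in> S \<and> (\<exists>e>0. \<forall>y\<in>S. dist y x < e \<longrightarrow> f x \<le> f y)"

definition global_min_on :: "(voigt \<Rightarrow> real) \<Rightarrow> voigt set \<Rightarrow> voigt \<Rightarrow> bool" where
  "global_min_on f S x \<longleftrightarrow> x \<in> S \<and> (\<forall>y\<in>S. f x \<le> f y)"

text \<open>The map T (kappa_m, kappa_d, kappa_t), with k12 = (third Voigt component)/2.\<close>
definition Tmap :: "real \<Rightarrow> real \<Rightarrow> real \<Rightarrow> voigt \<Rightarrow> voigt" where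
  "Tmap \<nu> \<beta> \<alpha> k =
     (sqrt (1 + \<nu> / sqrt \<beta>) * (fst k + sqrt \<beta> * fst (snd k)) / 2,
      sqrt (1 - \<nu> / sqrt \<beta>) * (sqrt \<beta> * fst (snd k) - fst k) / 2,
      sqrt ((1 - \<nu>) * \<alpha>) * (snd (snd k) / 2))"

definition aP :: "real \<Rightarrow> real \<Rightarrow> real" where
  "aP \<nu> \<beta> = sqrt ((sqrt \<beta> - \<nu>) / (sqrt \<beta> + \<nu>))"

definition bP :: "real \<Rightarrow> real \<Rightarrow> real \<Rightarrow> real" where
  "bP \<nu> \<beta> \<alpha> = sqrt (\<alpha> * (1 - \<nu>) / (sqrt \<beta> + \<nu>))"

definition Utilde :: "real \<Rightarrow> real \<Rightarrow> real \<Rightarrow> voigt \<Rightarrow> real \<Rightarrow> real" where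
  "Utilde \<nu> \<beta> \<alpha> kbar \<theta> =
     Inf (range (\<lambda>km::real. 1/2 * (norm (km *\<^sub>R (1, aP \<nu> \<beta> * cos \<theta>, bP \<nu> \<beta> \<alpha> * sin \<theta>)
                                   - Tmap \<nu> \<beta> \<alpha> kbar))^2))"

end

theory Submission
  imports Defs
begin

lemma E_eq: "energy D \<nu> 1 \<alpha> (kb,kb,0) (u,v,w) = D/2 * ((u-kb)^2 + 2*\<nu>*(u-kb)*(v-kb) + (v-kb)^2 + \<alpha>*(1-\<nu>)/2* w^2)"
  by (simp add: energy_def stiff_def inner_Pair power2_eq_square algebra_simps)

lemma S_iff: "((u,v,w) \<in> {k. detV k = 0}) = (w^2 = 4* u* v)"
  by (auto simp: detV_def power2_eq_square field_simps)

lemma detV_iff: "(detV (u,v,w) = 0) = (w^2 = 4 * u * v)"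
  by (auto simp: detV_def power2_eq_square field_simps)

lemma E_S1: assumes "w^2 = 4* u* v"
  shows "energy D \<nu> 1 \<alpha> (kb,kb,0) (u,v,w) = D/2 * ((u+v-(1+\<nu>)* kb)^2 + (1-\<nu>^2)* kb^2 + 2*(1-\<nu>)*(\<alpha>-1)*(u* v))"
proof -
  have "energy D \<nu> 1 \<alpha> (kb,kb,0) (u,v,w) = D/2 * ((u-kb)^2 + 2*\<nu>*(u-kb)*(v-kb) + (v-kb)^2 + \<alpha>*(1-\<nu>)/2*(4* u* v))"
    by (simp only: E_eq assms)
  then show ?thesis by (simp add: field_simps power2_eq_square)
qed

lemma E_S2: assumes "w^2 = 4* u* v" and P: "P = 1 + \<nu> + \<alpha>*(1-\<nu>)" "P \<noteq> 0"
  shows "P * energy D \<nu> 1 \<alpha> (kb,kb,0) (u,v,w) = D/2 * ((P*(u+v) - 2*(1+\<nu>)* kb)^2/2 + P*(1-\<nu>)*(1-\<alpha>)*(u-v)^2/2 + 2*(1+\<nu>)*(1-\<nu>)*\<alpha>* kb^2)"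
proof -
  have h: "energy D \<nu> 1 \<alpha> (kb,kb,0) (u,v,w) = D/2 * ((u-kb)^2 + 2*\<nu>*(u-kb)*(v-kb) + (v-kb)^2 + \<alpha>*(1-\<nu>)/2*(4* u* v))"
    by (simp only: E_eq assms(1))
  show ?thesis unfolding P(1) h by (simp add: field_simps power2_eq_square)
qed

lemma E_scale: "energy D \<nu> 1 \<alpha> (kb,kb,0) (l* u,l* v,l* w) - energy D \<nu> 1 \<alpha> (kb,kb,0) (u,v,w)
   = D/2 * (l - 1) * ((l+1)*(u^2+2*\<nu>* u* v+v^2+\<alpha>*(1-\<nu>)/2* w^2) - 2* kb*(1+\<nu>)*(u+v))"
  unfolding E_eq power2_eq_square by (simp add: field_simps)

lemma no_local_min:
  assumes "local_min_on f S k" "(\<gamma> \<longlongrightarrow> k) (at_right (0::real))"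
    "\<And>t. 0 < t \<Longrightarrow> t < d \<Longrightarrow> \<gamma> t \<in> S \<and> f (\<gamma> t) < f k" "d > 0"
  shows False
proof -
  from assms(1) obtain e where e: "e > 0" "\<forall>y\<in>S. dist y k < e \<longrightarrow> f k \<le> f y"
    unfolding local_min_on_def by auto
  have "eventually (\<lambda>t. dist (\<gamma> t) k < e) (at_right 0)"
    using assms(2) e(1) tendsto_iff by blast
  moreover have "eventually (\<lambda>t. \<gamma> t \<in> S \<and> f (\<gamma> t) < f k) (at_right 0)"
    using assms(3,4) eventually_at_rightI[of 0 d] by auto
  ultimately have "eventually (\<lambda>t. False) (at_right (0::real))"
    by eventually_elim (use e in force)
  then show False by simp
qed
lemma lm_S: "local_min_on f {k. detV k = 0} (u,v,w) \<Longrightarrow> w^2 = 4* u* v"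
  unfolding local_min_on_def using S_iff by blast

lemma Q_nonneg: fixes u v w \<nu> \<alpha> :: real assumes "-1 < \<nu>" "\<nu> < 1" "\<alpha> > 0"
  shows "u^2+2*\<nu>* u* v+v^2+\<alpha>*(1-\<nu>)/2* w^2 \<ge> 0"
proof -
  have "u^2+2*\<nu>* u* v+v^2 = (1+\<nu>)/2*(u+v)^2 + (1-\<nu>)/2*(u-v)^2"
    by (simp add: field_simps power2_eq_square)
  moreover have "(1+\<nu>)/2*(u+v)^2 \<ge> 0" "(1-\<nu>)/2*(u-v)^2 \<ge> 0" "\<alpha>*(1-\<nu>)/2* w^2 \<ge> 0"
    using assms by auto
  ultimately show ?thesis by linarith
qed

lemma radial:
  assumes D: "D>0" "-1<\<nu>" "\<nu><1" "\<alpha>>0"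
  and lm: "local_min_on (energy D \<nu> 1 \<alpha> (kb,kb,0)) {k. detV k = 0} (u,v,w)"
  shows "u^2+2*\<nu>* u* v+v^2+\<alpha>*(1-\<nu>)/2* w^2 = kb*(1+\<nu>)*(u+v)"
proof (rule ccontr)
  define Q where "Q = u^2+2*\<nu>* u* v+v^2+\<alpha>*(1-\<nu>)/2* w^2"
  define g where "g = 2*Q - 2* kb*(1+\<nu>)*(u+v)"
  assume "\<not> ?thesis"
  then have g: "g \<noteq> 0" unfolding g_def Q_def by auto
  have Q0: "Q \<ge> 0" unfolding Q_def using Q_nonneg D by blast
  have inS: "w^2 = 4* u* v" using lm_S[OF lm] .
  define \<gamma> where "\<gamma> = (\<lambda>t::real. ((1-t* g)* u, (1-t* g)* v, (1-t* g)* w))"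
  show False
  proof (rule no_local_min[OF lm, of \<gamma> "1/(Q+1)"])
    have "(\<gamma> \<longlongrightarrow> ((1-0* g)* u, (1-0* g)* v, (1-0* g)* w)) (at_right 0)"
      unfolding \<gamma>_def by (intro tendsto_intros)
    then show "(\<gamma> \<longlongrightarrow> (u,v,w)) (at_right 0)" by simp
    show "0 < 1/(Q+1)" using Q0 by simp
    fix t :: real assume t: "0 < t" "t < 1/(Q+1)"
    have tQ: "t*Q < 1"
    proof -
      have "t*(Q+1) < 1" using t Q0 by (simp add: field_simps)
      then show ?thesis using t by (simp add: algebra_simps)
    qed
    have "((1-t* g)* w)^2 = 4*((1-t* g)* u)*((1-t* g)* v)"
      unfolding power_mult_distrib inS by (simp add: power2_eq_square algebra_simps)
    then show "\<gamma> t \<in> {k. detV k = 0} \<and> energy D \<nu> 1 \<alpha> (kb,kb,0) (\<gamma> t) < energy D \<nu> 1 \<alpha> (kb,kb,0) (u,v,w)"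
    proof (intro conjI)
      show "\<gamma> t \<in> {k. detV k = 0}" unfolding \<gamma>_def S_iff using \<open>((1-t* g)* w)^2 = _\<close> by simp
      have "energy D \<nu> 1 \<alpha> (kb,kb,0) (\<gamma> t) - energy D \<nu> 1 \<alpha> (kb,kb,0) (u,v,w)
          = D/2 * ((1-t* g) - 1) * (((1-t* g)+1)*Q - 2* kb*(1+\<nu>)*(u+v))"
        unfolding \<gamma>_def Q_def by (rule E_scale)
      also have "\<dots> = - (D/2 * t * g^2 * (1 - t*Q))"
        unfolding g_def by (simp add: power2_eq_square algebra_simps)
      also have "\<dots> < 0" using D t g tQ by (simp add: mult_pos_pos)
      finally show "energy D \<nu> 1 \<alpha> (kb,kb,0) (\<gamma> t) < energy D \<nu> 1 \<alpha> (kb,kb,0) (u,v,w)" by simp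
    qed
  qed
qed

lemma origin:
  assumes D: "D>0" "-1<\<nu>" "kb > 0"
  and lm: "local_min_on (energy D \<nu> 1 \<alpha> (kb,kb,0)) {k. detV k = 0} (0,0,0)"
  shows False
proof (rule no_local_min[OF lm, of "\<lambda>t. (t,0,0)" "2*(1+\<nu>)* kb"])
  have "((\<lambda>t::real. (t,0::real,0::real)) \<longlongrightarrow> (0,0,0)) (at_right 0)"
    by (intro tendsto_intros)
  then show "((\<lambda>t::real. (t,0::real,0::real)) \<longlongrightarrow> (0,0,0)) (at_right 0)" .
  show "0 < 2*(1+\<nu>)* kb" using D by simp
  fix t :: real assume t: "0 < t" "t < 2*(1+\<nu>)* kb"
  have "energy D \<nu> 1 \<alpha> (kb,kb,0) (t,0,0) - energy D \<nu> 1 \<alpha> (kb,kb,0) (0,0,0) = D/2 * t * (t - 2*(1+\<nu>)* kb)"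
    unfolding E_eq by (simp add: power2_eq_square algebra_simps)
  also have "\<dots> < 0" using D t by (simp add: mult_pos_neg)
  finally show "(t,0,0) \<in> {k. detV k = 0} \<and> energy D \<nu> 1 \<alpha> (kb,kb,0) (t,0,0) < energy D \<nu> 1 \<alpha> (kb,kb,0) (0,0,0)"
    by (simp add: S_iff detV_iff detV_def)
qed

lemma angular:
  assumes D: "D>0"
  and lm: "local_min_on (energy D \<nu> 1 \<alpha> (kb,kb,0)) {k. detV k = 0} (u,v,w)"
  and d: "d > 0"
  and desc: "\<And>t. 0<t \<Longrightarrow> t<d \<Longrightarrow> (u-e* t)*(v+e* t) \<ge> 0 \<and> (1-\<nu>)*(\<alpha>-1)*((u-e* t)*(v+e* t) - u* v) < 0"
  shows False
proof -
  have inS: "w^2 = 4* u* v" using lm_S[OF lm] .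
  define \<sigma> where "\<sigma> = (if w \<ge> 0 then 1 else -1::real)"
  define \<gamma> where "\<gamma> = (\<lambda>t::real. (u - e* t, v + e* t, \<sigma>*2* sqrt((u-e* t)*(v+e* t))))"
  have sw: "\<sigma>*2* sqrt(u* v) = w"
  proof -
    have "u* v = (w/2)^2" using inS by (simp add: power2_eq_square)
    then have "sqrt(u* v) = \<bar>w/2\<bar>" by simp
    then show ?thesis unfolding \<sigma>_def by auto
  qed
  show False
  proof (rule no_local_min[OF lm, of \<gamma> d])
    have "(\<gamma> \<longlongrightarrow> (u - e*0, v + e*0, \<sigma>*2* sqrt((u-e*0)*(v+e*0)))) (at_right 0)"
      unfolding \<gamma>_def by (intro tendsto_intros)
    then show "(\<gamma> \<longlongrightarrow> (u,v,w)) (at_right 0)" using sw by simp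
    show "0 < d" by fact
    fix t :: real assume t: "0 < t" "t < d"
    note h = desc[OF t]
    have s2: "\<sigma>^2 = 1" unfolding \<sigma>_def by simp
    have inS': "(\<sigma>*2* sqrt((u-e* t)*(v+e* t)))^2 = 4*(u-e* t)*(v+e* t)"
      unfolding power_mult_distrib s2 using h by simp
    have "energy D \<nu> 1 \<alpha> (kb,kb,0) (\<gamma> t) - energy D \<nu> 1 \<alpha> (kb,kb,0) (u,v,w)
        = D * ((1-\<nu>)*(\<alpha>-1)*((u-e* t)*(v+e* t) - u* v))"
      unfolding \<gamma>_def E_S1[OF inS'] E_S1[OF inS] by (simp add: algebra_simps)
    also have "\<dots> < 0" using D h by (simp add: mult_pos_neg)
    finally show "\<gamma> t \<in> {k. detV k = 0} \<and> energy D \<nu> 1 \<alpha> (kb,kb,0) (\<gamma> t) < energy D \<nu> 1 \<alpha> (kb,kb,0) (u,v,w)"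
      using inS' unfolding \<gamma>_def S_iff by simp
  qed
qed


lemma char_ge1:
  assumes D: "D>0" "-1<\<nu>" "\<nu><1" "\<alpha> \<ge> 1"
  shows "global_min_on (energy D \<nu> 1 \<alpha> (kb,kb,0)) {k. detV k = 0} (u,v,w) \<longleftrightarrow>
     (w^2 = 4 * u * v \<and> u + v = (1+\<nu>) * kb \<and> (\<alpha>-1) * (u * v) = 0)"
proof -
  define m0 where "m0 = D/2 * ((1-\<nu>^2) * kb^2)"
  have Eq: "energy D \<nu> 1 \<alpha> (kb,kb,0) ((1+\<nu>) * kb, 0, 0) = m0"
    unfolding m0_def by (subst E_S1) (simp_all add: power2_eq_square algebra_simps)
  have qS: "((1+\<nu>) * kb, 0, 0) \<in> {k. detV k = 0}" by (simp add: detV_def)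
  have low: "energy D \<nu> 1 \<alpha> (kb,kb,0) (x,y,z) = m0 + D/2 * ((x+y-(1+\<nu>) * kb)^2 + 2 * (1-\<nu>) * (\<alpha>-1) * (x * y))"
     and nn: "(1-\<nu>) * (\<alpha>-1) * (x * y) \<ge> 0"
    if "(x,y,z) \<in> {k. detV k = 0}" for x y z
  proof -
    have h: "z^2 = 4 * x * y" using that S_iff by blast
    show "energy D \<nu> 1 \<alpha> (kb,kb,0) (x,y,z) = m0 + D/2 * ((x+y-(1+\<nu>) * kb)^2 + 2 * (1-\<nu>) * (\<alpha>-1) * (x * y))"
      unfolding E_S1[OF h] m0_def by (simp add: algebra_simps)
    have "x * y \<ge> 0" using h by (metis mult.assoc mult_nonneg_nonneg zero_le_numeral zero_le_power2 mult_le_cancel_left_pos zero_less_numeral mult_zero_right)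
    then show "(1-\<nu>) * (\<alpha>-1) * (x * y) \<ge> 0" using D by simp
  qed
  show ?thesis
  proof
    assume g: "global_min_on (energy D \<nu> 1 \<alpha> (kb,kb,0)) {k. detV k = 0} (u,v,w)"
    then have pS: "(u,v,w) \<in> {k. detV k = 0}" and le: "energy D \<nu> 1 \<alpha> (kb,kb,0) (u,v,w) \<le> m0"
      unfolding global_min_on_def using qS Eq by auto
    have A: "(u+v-(1+\<nu>) * kb)^2 \<ge> 0" by simp
    have B: "(1-\<nu>) * (\<alpha>-1) * (u * v) \<ge> 0" using nn[OF pS] .
    have C: "D/2 * ((u+v-(1+\<nu>) * kb)^2 + 2 * (1-\<nu>) * (\<alpha>-1) * (u * v)) \<le> 0" using le low[OF pS] by simp
    then have "(u+v-(1+\<nu>) * kb)^2 + 2 * (1-\<nu>) * (\<alpha>-1) * (u * v) \<le> 0" using D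
      by (simp add: mult_le_0_iff)
    then have "(u+v-(1+\<nu>) * kb)^2 = 0" "(1-\<nu>) * (\<alpha>-1) * (u * v) = 0" using A B by linarith+
    moreover have "w^2 = 4 * u * v" using pS S_iff by blast
    ultimately show "w^2 = 4 * u * v \<and> u + v = (1+\<nu>) * kb \<and> (\<alpha>-1) * (u * v) = 0"
      using D by simp
  next
    assume h: "w^2 = 4 * u * v \<and> u + v = (1+\<nu>) * kb \<and> (\<alpha>-1) * (u * v) = 0"
    then have pS: "(u,v,w) \<in> {k. detV k = 0}" by (simp add: S_iff detV_iff)
    have "energy D \<nu> 1 \<alpha> (kb,kb,0) (u,v,w) = m0" using low[OF pS] h by simp
    moreover have "m0 \<le> energy D \<nu> 1 \<alpha> (kb,kb,0) y" if "y \<in> {k. detV k = 0}" for y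
    proof -
      obtain x1 x2 x3 where y: "y = (x1,x2,x3)" by (cases y) auto
      have yS: "(x1,x2,x3) \<in> {k. detV k = 0}" using that y by simp
      have n1: "2*((1-\<nu>) * (\<alpha>-1) * (x1 * x2)) \<ge> 0" using nn[OF yS] by simp
      have "0 \<le> (x1+x2-(1+\<nu>) * kb)^2 + 2*((1-\<nu>) * (\<alpha>-1) * (x1 * x2))"
        using n1 zero_le_power2[of "x1+x2-(1+\<nu>) * kb"] by linarith
      then have "0 \<le> D/2 * ((x1+x2-(1+\<nu>) * kb)^2 + 2*((1-\<nu>) * (\<alpha>-1) * (x1 * x2)))"
        using D by simp
      then show ?thesis using low[OF yS] unfolding y by (simp add: algebra_simps)
    qed
    ultimately show "global_min_on (energy D \<nu> 1 \<alpha> (kb,kb,0)) {k. detV k = 0} (u,v,w)"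
      unfolding global_min_on_def using pS by simp
  qed
qed

lemma char_lt1:
  assumes D: "D>0" "-1<\<nu>" "\<nu><1" "\<alpha> > 0" "\<alpha> < 1"
  and c: "c = (1 + \<nu>) * kb / (1 + \<nu> + \<alpha> - \<alpha> * \<nu>)"
  shows "global_min_on (energy D \<nu> 1 \<alpha> (kb,kb,0)) {k. detV k = 0} (u,v,w) \<longleftrightarrow>
     (u = c \<and> v = c \<and> w^2 = 4 * c^2)"
proof -
  define P where "P = 1 + \<nu> + \<alpha> * (1-\<nu>)"
  have P0: "P > 0" unfolding P_def using D by (simp add: add_pos_pos)
  have PP: "1 + \<nu> + \<alpha> - \<alpha> * \<nu> = P" unfolding P_def by (simp add: algebra_simps)
  have Pc: "P * c = (1+\<nu>) * kb" unfolding c PP using P0 by simp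
  define m0 where "m0 = D/2 * (2 * (1+\<nu>) * (1-\<nu>) * \<alpha> * kb^2)"
  have low: "P * energy D \<nu> 1 \<alpha> (kb,kb,0) (x,y,z) = m0 + D/2 * ((P * (x+y) - 2 * (1+\<nu>) * kb)^2/2 + P * (1-\<nu>) * (1-\<alpha>) * (x-y)^2/2)"
    if "(x,y,z) \<in> {k. detV k = 0}" for x y z
  proof -
    have h: "z^2 = 4 * x * y" using that S_iff by blast
    show ?thesis
      unfolding E_S2[OF h P_def P0[THEN less_imp_neq, symmetric]] m0_def using P0 by (simp add: algebra_simps)
  qed
  have nn: "P * (1-\<nu>) * (1-\<alpha>) * (x-y)^2/2 \<ge> 0" for x y using P0 D by simp
  have qS: "(c, c, 2 * c) \<in> {k. detV k = 0}" by (simp add: S_iff detV_iff power2_eq_square)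
  have Eq: "P * energy D \<nu> 1 \<alpha> (kb,kb,0) (c, c, 2 * c) = m0"
    using low[OF qS] Pc by (simp add: algebra_simps)
  show ?thesis
  proof
    assume g: "global_min_on (energy D \<nu> 1 \<alpha> (kb,kb,0)) {k. detV k = 0} (u,v,w)"
    then have pS: "(u,v,w) \<in> {k. detV k = 0}" and le: "energy D \<nu> 1 \<alpha> (kb,kb,0) (u,v,w) \<le> energy D \<nu> 1 \<alpha> (kb,kb,0) (c, c, 2 * c)"
      unfolding global_min_on_def using qS by auto
    then have "P * energy D \<nu> 1 \<alpha> (kb,kb,0) (u,v,w) \<le> m0" using Eq P0
      by (metis mult_le_cancel_left_pos)
    then have C: "D/2 * ((P * (u+v) - 2 * (1+\<nu>) * kb)^2/2 + P * (1-\<nu>) * (1-\<alpha>) * (u-v)^2/2) \<le> 0"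
      using low[OF pS] by simp
    then have "(P * (u+v) - 2 * (1+\<nu>) * kb)^2/2 + P * (1-\<nu>) * (1-\<alpha>) * (u-v)^2/2 \<le> 0" using D
      by (simp add: mult_le_0_iff)
    moreover have "(P * (u+v) - 2 * (1+\<nu>) * kb)^2/2 \<ge> 0" by simp
    ultimately have e1: "(P * (u+v) - 2 * (1+\<nu>) * kb)^2 = 0" and e2: "P * (1-\<nu>) * (1-\<alpha>) * (u-v)^2/2 = 0"
      using nn[of u v] by linarith+
    have "u = v" using e2 P0 D by simp
    moreover have "P * (u+v) = 2 * (1+\<nu>) * kb" using e1 by simp
    moreover have "P * (u+v) = P * u + P * v" by (simp add: algebra_simps)
    ultimately have "P * u = P * c" using Pc by (simp add: algebra_simps)
    then have "u = c" using P0 by simp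
    then show "u = c \<and> v = c \<and> w^2 = 4 * c^2" using \<open>u = v\<close> pS by (simp add: S_iff detV_iff power2_eq_square)
  next
    assume h: "u = c \<and> v = c \<and> w^2 = 4 * c^2"
    then have pS: "(u,v,w) \<in> {k. detV k = 0}" by (simp add: S_iff detV_iff power2_eq_square)
    have "P * energy D \<nu> 1 \<alpha> (kb,kb,0) (u,v,w) = m0" using low[OF pS] h Pc by (simp add: algebra_simps)
    moreover have "m0 \<le> P * energy D \<nu> 1 \<alpha> (kb,kb,0) y" if "y \<in> {k. detV k = 0}" for y
    proof -
      obtain x1 x2 x3 where y: "y = (x1,x2,x3)" by (cases y) auto
      show ?thesis using low[of x1 x2 x3] nn[of x1 x2] that D unfolding y
        by (simp add: mult_nonneg_nonneg)
    qed
    ultimately show "global_min_on (energy D \<nu> 1 \<alpha> (kb,kb,0)) {k. detV k = 0} (u,v,w)"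
      unfolding global_min_on_def using pS P0 by (metis mult_le_cancel_left_pos)
  qed
qed


lemma Q_zero: fixes u v w \<nu> \<alpha> :: real assumes "-1 < \<nu>" "\<nu> < 1" "\<alpha> > 0"
  and "u^2+2 * \<nu> * u * v+v^2+\<alpha> * (1-\<nu>)/2 * w^2 = 0"
  shows "u = 0 \<and> v = 0 \<and> w = 0"
proof -
  have "u^2+2 * \<nu> * u * v+v^2 = (1+\<nu>)/2 * (u+v)^2 + (1-\<nu>)/2 * (u-v)^2"
    by (simp add: field_simps power2_eq_square)
  moreover have a: "(1+\<nu>)/2 * (u+v)^2 \<ge> 0" "(1-\<nu>)/2 * (u-v)^2 \<ge> 0" "\<alpha> * (1-\<nu>)/2 * w^2 \<ge> 0"
    using assms by auto
  ultimately have "(1+\<nu>)/2 * (u+v)^2 = 0" "(1-\<nu>)/2 * (u-v)^2 = 0" "\<alpha> * (1-\<nu>)/2 * w^2 = 0"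
    using assms(4) by linarith+
  then have "u+v = 0" "u - v = 0" "w = 0" using assms by auto
  then show ?thesis by auto
qed

lemma local_imp_global:
  assumes D: "D>0" "-1<\<nu>" "\<nu><1" "\<alpha>>0" "kb>0"
  and c: "c = (1 + \<nu>) * kb / (1 + \<nu> + \<alpha> - \<alpha> * \<nu>)"
  and lm: "local_min_on (energy D \<nu> 1 \<alpha> (kb,kb,0)) {k. detV k = 0} (u,v,w)"
  shows "global_min_on (energy D \<nu> 1 \<alpha> (kb,kb,0)) {k. detV k = 0} (u,v,w)"
proof -
  have inS: "w^2 = 4 * u * v" using lm_S[OF lm] .
  have nz: "\<not> (u = 0 \<and> v = 0 \<and> w = 0)" using origin[OF D(1,2,5)] lm by auto
  have rad: "u^2+2 * \<nu> * u * v+v^2+\<alpha> * (1-\<nu>)/2 * w^2 = kb * (1+\<nu>) * (u+v)"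
    using radial[OF D(1-4) lm] .
  have "u^2+2 * \<nu> * u * v+v^2+\<alpha> * (1-\<nu>)/2 * w^2 \<noteq> 0" using Q_zero[OF D(2-4)] nz by blast
  moreover have "u^2+2 * \<nu> * u * v+v^2+\<alpha> * (1-\<nu>)/2 * w^2 \<ge> 0" using Q_nonneg[OF D(2-4)] by blast
  ultimately have "kb * (1+\<nu>) * (u+v) > 0" using rad by linarith
  moreover have kp: "kb * (1+\<nu>) > 0" using D by simp
  ultimately have upv: "u + v > 0" by (simp add: zero_less_mult_iff)
  have uv0: "u * v \<ge> 0" using inS by (metis mult.assoc zero_le_power2 mult_le_cancel_left_pos zero_less_numeral mult_zero_right)
  have u0: "u \<ge> 0"
  proof (rule ccontr)
    assume "\<not> u \<ge> 0" then have "u < 0" "v > 0" using upv by auto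
    then have "u * v < 0" by (simp add: mult_neg_pos)
    then show False using uv0 by simp
  qed
  have v0: "v \<ge> 0"
  proof (rule ccontr)
    assume "\<not> v \<ge> 0" then have "v < 0" "u > 0" using upv by auto
    then have "u * v < 0" by (simp add: mult_pos_neg)
    then show False using uv0 by simp
  qed
  have sumR: "u + v = (1+\<nu>) * kb" if "u^2+2 * \<nu> * u * v+v^2+\<alpha> * (1-\<nu>)/2 * w^2 = (u+v)^2"
  proof -
    have "(u+v) * (u+v) = (u+v) * ((1+\<nu>) * kb)" using rad that by (simp add: power2_eq_square algebra_simps)
    then show ?thesis using upv by simp
  qed
  consider "\<alpha> > 1" | "\<alpha> < 1" | "\<alpha> = 1" by linarith
  then show ?thesis
  proof cases
    case 1
    have uvz: "u * v = 0"
    proof (rule ccontr)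
      assume "u * v \<noteq> 0"
      then have up: "u > 0" and vp: "v > 0" using u0 v0 by auto
      have k: "(1-\<nu>) * (\<alpha>-1) > 0" using 1 D by simp
      show False
      proof (cases "u \<ge> v")
        case True
        show False
        proof (rule angular[OF D(1) lm vp, of "-1"])
          fix t :: real assume t: "0 < t" "t < v"
          have e: "(u - (-1) * t) * (v + (-1) * t) - u * v = t * (v - u) - t^2"
            by (simp add: power2_eq_square algebra_simps)
          have "t * (v - u) \<le> 0" using t True by (simp add: mult_nonneg_nonpos)
          moreover have "t^2 > 0" using t by simp
          ultimately have "(u - (-1) * t) * (v + (-1) * t) - u * v < 0" using e by linarith
          moreover have "(u - (-1) * t) * (v + (-1) * t) \<ge> 0" using t up by simp
          ultimately show "(u - (-1) * t) * (v + (-1) * t) \<ge> 0 \<and> (1-\<nu>) * (\<alpha>-1) * ((u - (-1) * t) * (v + (-1) * t) - u * v) < 0"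
            using k by (simp add: mult_pos_neg)
        qed
      next
        case False
        show False
        proof (rule angular[OF D(1) lm up, of "1"])
          fix t :: real assume t: "0 < t" "t < u"
          have e: "(u - 1 * t) * (v + 1 * t) - u * v = t * (u - v) - t^2"
            by (simp add: power2_eq_square algebra_simps)
          have "t * (u - v) \<le> 0" using t False by (simp add: mult_nonneg_nonpos)
          moreover have "t^2 > 0" using t by simp
          ultimately have "(u - 1 * t) * (v + 1 * t) - u * v < 0" using e by linarith
          moreover have "(u - 1 * t) * (v + 1 * t) \<ge> 0" using t vp by simp
          ultimately show "(u - 1 * t) * (v + 1 * t) \<ge> 0 \<and> (1-\<nu>) * (\<alpha>-1) * ((u - 1 * t) * (v + 1 * t) - u * v) < 0"
            using k by (simp add: mult_pos_neg)
        qed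
      qed
    qed
    have "w^2 = 0" using inS uvz by (simp add: mult.assoc)
    then have "w = 0" by simp
    then have "u^2+2 * \<nu> * u * v+v^2+\<alpha> * (1-\<nu>)/2 * w^2 = (u+v)^2"
      using uvz by (simp add: power2_eq_square algebra_simps)
    then have "u + v = (1+\<nu>) * kb" by (rule sumR)
    then show ?thesis using char_ge1[OF D(1-3)] 1 inS uvz by simp
  next
    case 2
    have k: "(1-\<nu>) * (\<alpha>-1) < 0" using 2 D by (simp add: mult_pos_neg)
    have ueqv: "u = v"
    proof (rule ccontr)
      assume "u \<noteq> v"
      then consider "u > v" | "u < v" by linarith
      then show False
      proof cases
        case 1
        then have dp: "u - v > 0" by simp
        show False
        proof (rule angular[OF D(1) lm dp, of "1"])
          fix t :: real assume t: "0 < t" "t < u - v"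
          have e: "(u - 1 * t) * (v + 1 * t) - u * v = t * ((u - v) - t)"
            by (simp add: power2_eq_square algebra_simps)
          have "t * ((u - v) - t) > 0" using t by simp
          then have "(u - 1 * t) * (v + 1 * t) - u * v > 0" using e by linarith
          moreover then have "(u - 1 * t) * (v + 1 * t) \<ge> 0" using uv0 by linarith
          ultimately show "(u - 1 * t) * (v + 1 * t) \<ge> 0 \<and> (1-\<nu>) * (\<alpha>-1) * ((u - 1 * t) * (v + 1 * t) - u * v) < 0"
            using k by (simp add: mult_neg_pos)
        qed
      next
        case 2
        then have dp: "v - u > 0" by simp
        show False
        proof (rule angular[OF D(1) lm dp, of "-1"])
          fix t :: real assume t: "0 < t" "t < v - u"
          have e: "(u - (-1) * t) * (v + (-1) * t) - u * v = t * ((v - u) - t)"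
            by (simp add: power2_eq_square algebra_simps)
          have "t * ((v - u) - t) > 0" using t by simp
          then have "(u - (-1) * t) * (v + (-1) * t) - u * v > 0" using e by linarith
          moreover then have "(u - (-1) * t) * (v + (-1) * t) \<ge> 0" using uv0 by linarith
          ultimately show "(u - (-1) * t) * (v + (-1) * t) \<ge> 0 \<and> (1-\<nu>) * (\<alpha>-1) * ((u - (-1) * t) * (v + (-1) * t) - u * v) < 0"
            using k by (simp add: mult_neg_pos)
        qed
      qed
    qed
    have up: "u > 0" using upv ueqv by simp
    have q: "u^2+2 * \<nu> * u * v+v^2+\<alpha> * (1-\<nu>)/2 * w^2 = u * (2 * u * (1 + \<nu> + \<alpha> - \<alpha> * \<nu>))"
      unfolding inS ueqv by (simp add: field_simps power2_eq_square)
    have r2: "kb * (1+\<nu>) * (u+v) = u * (2 * (1+\<nu>) * kb)" unfolding ueqv by (simp add: algebra_simps)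
    have "u * (2 * u * (1 + \<nu> + \<alpha> - \<alpha> * \<nu>)) = u * (2 * (1+\<nu>) * kb)"
      using rad q r2 by linarith
    then have "2 * u * (1 + \<nu> + \<alpha> - \<alpha> * \<nu>) = 2 * (1+\<nu>) * kb" using up by simp
    moreover have "1 + \<nu> + \<alpha> - \<alpha> * \<nu> > 0"
    proof -
      have "\<alpha> * (1 - \<nu>) > 0" using D by simp
      then have "\<alpha> * \<nu> < \<alpha>" by (simp add: algebra_simps)
      then show ?thesis using D by linarith
    qed
    ultimately have "u = c" unfolding c by (simp add: field_simps)
    then show ?thesis using char_lt1[OF D(1-4) 2 c] ueqv inS by (simp add: power2_eq_square)
  next
    case 3
    have "u^2+2 * \<nu> * u * v+v^2+\<alpha> * (1-\<nu>)/2 * w^2 = (u+v)^2"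
      unfolding 3 inS by (simp add: field_simps power2_eq_square)
    then have "u + v = (1+\<nu>) * kb" by (rule sumR)
    then show ?thesis using char_ge1[OF D(1-3)] 3 inS by simp
  qed
qed


lemma Tmap_kb: "Tmap \<nu> 1 \<alpha> (kb,kb,0) = (sqrt (1+\<nu>) * kb, 0, 0)"
  by (simp add: Tmap_def)

lemma Utilde_eq:
  fixes A B K :: real
  shows "Inf (range (\<lambda>km::real. 1/2 * (norm (km *\<^sub>R (1, A * cos \<theta>, B * sin \<theta>) - (K,0,0)))^2))
     = K^2 * (A^2 * (cos \<theta>)^2 + B^2 * (sin \<theta>)^2) / (2 * (1 + (A^2 * (cos \<theta>)^2 + B^2 * (sin \<theta>)^2)))"
proof -
  define q where "q = A^2 * (cos \<theta>)^2 + B^2 * (sin \<theta>)^2"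
  have q0: "q \<ge> 0" unfolding q_def by simp
  have fe: "1/2 * (norm (km *\<^sub>R (1, A * cos \<theta>, B * sin \<theta>) - (K,0,0)))^2 = 1/2 * ((km - K)^2 + q * km^2)" for km
    unfolding q_def power2_norm_eq_inner by (simp add: inner_Pair power2_eq_square algebra_simps)
  show ?thesis unfolding fe q_def[symmetric]
  proof (rule cInf_eq_minimum)
    show "K^2 * q / (2 * (1 + q)) \<in> range (\<lambda>km. 1/2 * ((km - K)^2 + q * km^2))"
    proof
      define r where "r = 1 + q"
      have r0: "r \<noteq> 0" using q0 unfolding r_def by simp
      have qr: "q = r - 1" unfolding r_def by simp
      show "K^2 * q / (2 * (1 + q)) = 1/2 * ((K/(1+q) - K)^2 + q * (K/(1+q))^2)"
        unfolding r_def[symmetric] qr using r0 by (simp add: field_simps power2_eq_square)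
    qed simp
    fix x assume "x \<in> range (\<lambda>km. 1/2 * ((km - K)^2 + q * km^2))"
    then obtain km where x: "x = 1/2 * ((km - K)^2 + q * km^2)" by auto
    have "(1+q) * ((km - K)^2 + q * km^2) = ((1+q) * km - K)^2 + q * K^2"
      by (simp add: power2_eq_square algebra_simps)
    then have "(1+q) * ((km - K)^2 + q * km^2) \<ge> q * K^2" by simp
    then show "K^2 * q / (2 * (1 + q)) \<le> x" unfolding x using q0
      by (simp add: field_simps)
  qed
qed

lemma Utilde_deriv:
  fixes A B K :: real
  shows "((\<lambda>\<theta>. K^2 * (A^2 * (cos \<theta>)^2 + B^2 * (sin \<theta>)^2) / (2 * (1 + (A^2 * (cos \<theta>)^2 + B^2 * (sin \<theta>)^2))))
     has_real_derivative (K^2 * (B^2 - A^2) * sin (2 * \<theta>) / (2 * (A^2 * (cos \<theta>)^2 + B^2 * (sin \<theta>)^2 + 1)^2))) (at \<theta>)"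
proof -
  have p: "1 + (A^2 * (cos \<theta>)^2 + B^2 * (sin \<theta>)^2) > 0" by (simp add: add_pos_nonneg)
  have p2: "A^2 * (cos \<theta>)^2 + B^2 * (sin \<theta>)^2 + 1 \<noteq> 0" using p by simp
  define q where "q = A^2 * (cos \<theta>)^2 + B^2 * (sin \<theta>)^2"
  have q1: "1 + q \<noteq> 0" "q + 1 \<noteq> 0" "2 * (1 + q) * (2 * (1 + q)) \<noteq> 0" "(q + 1)^2 \<noteq> 0" "2 * (q + 1)^2 \<noteq> 0"
    using p unfolding q_def by auto
  show ?thesis unfolding sin_double
    apply (rule derivative_eq_intros refl | simp)+
    subgoal using p by simp
    subgoal unfolding q_def[symmetric] using q1 by (simp add: field_simps) (simp add: power2_eq_square algebra_simps)?
    done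
qed


lemma family:
  fixes R :: real assumes R: "R > 0"
  shows "(w^2 = 4 * u * v \<and> u + v = R) \<longleftrightarrow>
    (\<exists>\<phi>. (u,v,w) = R *\<^sub>R ((cos \<phi>)^2, (sin \<phi>)^2, 2 * sin \<phi> * cos \<phi>) \<and> 0 \<le> \<phi> \<and> \<phi> < pi)"
proof
  assume h: "w^2 = 4 * u * v \<and> u + v = R"
  define x where "x = (u - v) / R"
  define y where "y = w / R"
  have "x^2 + y^2 = ((u-v)^2 + w^2) / R^2" unfolding x_def y_def by (simp add: power_divide add_divide_distrib)
  also have "(u-v)^2 + w^2 = R^2" using h by (auto simp: power2_eq_square algebra_simps)
  finally have "x^2 + y^2 = 1" using R by simp
  then obtain t where t: "0 \<le> t" "t < 2*pi" "x = cos t" "y = sin t" by (rule sincos_total_2pi)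
  define \<phi> where "\<phi> = t / 2"
  have t2: "t = 2 * \<phi>" unfolding \<phi>_def by simp
  have c1: "(u - v) / R = 1 - 2 * (sin \<phi>)^2" using t(3) unfolding x_def t2 cos_double_sin .
  have c2: "(u - v) / R = 2 * (cos \<phi>)^2 - 1" using t(3) unfolding x_def t2 cos_double_cos .
  have c3: "w / R = 2 * sin \<phi> * cos \<phi>" using t(4) unfolding y_def t2 sin_double .
  have "u - v = R * (2 * (cos \<phi>)^2 - 1)" using c2 R by (simp add: field_simps)
  then have eu: "u = R * (cos \<phi>)^2" using h by (simp add: algebra_simps)
  have "u - v = R * (1 - 2 * (sin \<phi>)^2)" using c1 R by (simp add: field_simps)
  then have ev: "v = R * (sin \<phi>)^2" using h by (simp add: algebra_simps)
  have ew: "w = R * (2 * sin \<phi> * cos \<phi>)" using c3 R by (simp add: field_simps)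
  show "\<exists>\<phi>. (u,v,w) = R *\<^sub>R ((cos \<phi>)^2, (sin \<phi>)^2, 2 * sin \<phi> * cos \<phi>) \<and> 0 \<le> \<phi> \<and> \<phi> < pi"
    using eu ev ew t(1,2) unfolding \<phi>_def by (intro exI[of _ "t/2"]) auto
next
  assume "\<exists>\<phi>. (u,v,w) = R *\<^sub>R ((cos \<phi>)^2, (sin \<phi>)^2, 2 * sin \<phi> * cos \<phi>) \<and> 0 \<le> \<phi> \<and> \<phi> < pi"
  then obtain \<phi> where "(u,v,w) = R *\<^sub>R ((cos \<phi>)^2, (sin \<phi>)^2, 2 * sin \<phi> * cos \<phi>)" by blast
  then have e: "u = R * (cos \<phi>)^2" "v = R * (sin \<phi>)^2" "w = R * (2 * sin \<phi> * cos \<phi>)" by auto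
  have "u + v = R" unfolding e distrib_left[symmetric] by simp
  moreover have "w^2 = 4 * u * v" unfolding e by (simp add: power2_eq_square algebra_simps)
  ultimately show "w^2 = 4 * u * v \<and> u + v = R" by simp
qed


theorem mainTheorem4:
  fixes D \<nu> \<alpha> kb :: real
  assumes "D > 0" and "-1 < \<nu>" and "\<nu> < 1" and "\<alpha> > 0" and "kb > 0"
  defines "E \<equiv> energy D \<nu> 1 \<alpha> (kb, kb, 0)"
      and "S \<equiv> {k. detV k = 0}"
      and "c \<equiv> (1 + \<nu>) * kb / (1 + \<nu> + \<alpha> - \<alpha> * \<nu>)"
  shows "{k. local_min_on E S k} = {k. global_min_on E S k}
    \<and> (\<alpha> > 1 \<longrightarrow> {k. global_min_on E S k} = {((1 + \<nu>) * kb, 0, 0), (0, (1 + \<nu>) * kb, 0)})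
    \<and> (\<alpha> < 1 \<longrightarrow> {k. global_min_on E S k} = {(c, c, 2 * c), (c, c, - 2 * c)})
    \<and> (\<alpha> = 1 \<longrightarrow> {k. global_min_on E S k} =
          {((1 + \<nu>) * kb) *\<^sub>R ((cos \<phi>)^2, (sin \<phi>)^2, 2 * sin \<phi> * cos \<phi>) | \<phi>. 0 \<le> \<phi> \<and> \<phi> < pi})
    \<and> (\<forall>\<theta>. (Utilde \<nu> 1 \<alpha> (kb, kb, 0) has_real_derivative
           (sqrt (1 + \<nu>) * kb)^2 * ((bP \<nu> 1 \<alpha>)^2 - (aP \<nu> 1)^2) * sin (2 * \<theta>)
           / (2 * ((aP \<nu> 1)^2 * (cos \<theta>)^2 + (bP \<nu> 1 \<alpha>)^2 * (sin \<theta>)^2 + 1)^2)) (at \<theta>))"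
proof -
  note D = assms(1-5)
  have cc: "c = (1 + \<nu>) * kb / (1 + \<nu> + \<alpha> - \<alpha> * \<nu>)" unfolding c_def ..
  have R0: "(1 + \<nu>) * kb > 0" using D by simp
  have LG: "local_min_on E S k \<longleftrightarrow> global_min_on E S k" for k
  proof -
    obtain u v w where k: "k = (u,v,w)" by (cases k) auto
    show ?thesis
    proof
      assume "local_min_on E S k"
      then show "global_min_on E S k" unfolding E_def S_def k using local_imp_global[OF D cc] by blast
    next
      assume "global_min_on E S k"
      then show "local_min_on E S k" unfolding global_min_on_def local_min_on_def
        by (intro conjI exI[of _ 1]) auto
    qed
  qed
  have P1: "{k. local_min_on E S k} = {k. global_min_on E S k}" using LG by blast
  have P2: "{k. global_min_on E S k} = {((1 + \<nu>) * kb, 0, 0), (0, (1 + \<nu>) * kb, 0)}" if a: "\<alpha> > 1"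
  proof (rule set_eqI)
    fix k :: voigt obtain u v w where k: "k = (u,v,w)" by (cases k) auto
    have "global_min_on E S (u,v,w) \<longleftrightarrow> (w^2 = 4 * u * v \<and> u + v = (1+\<nu>) * kb \<and> u * v = 0)"
      unfolding E_def S_def using char_ge1[OF D(1-3), of \<alpha> kb u v w] a by simp
    also have "\<dots> \<longleftrightarrow> (u,v,w) \<in> {((1 + \<nu>) * kb, 0, 0), (0, (1 + \<nu>) * kb, 0)}"
    proof
      assume h: "w^2 = 4 * u * v \<and> u + v = (1+\<nu>) * kb \<and> u * v = 0"
      then have "w^2 = 0" by (simp add: mult.assoc)
      then have "w = 0" by simp
      then show "(u,v,w) \<in> {((1 + \<nu>) * kb, 0, 0), (0, (1 + \<nu>) * kb, 0)}" using h by auto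
    qed auto
    finally show "k \<in> {k. global_min_on E S k} \<longleftrightarrow> k \<in> {((1 + \<nu>) * kb, 0, 0), (0, (1 + \<nu>) * kb, 0)}"
      unfolding k by simp
  qed
  have P3: "{k. global_min_on E S k} = {(c, c, 2 * c), (c, c, - 2 * c)}" if a: "\<alpha> < 1"
  proof (rule set_eqI)
    fix k :: voigt obtain u v w where k: "k = (u,v,w)" by (cases k) auto
    have "global_min_on E S (u,v,w) \<longleftrightarrow> (u = c \<and> v = c \<and> w^2 = (2 * c)^2)"
      unfolding E_def S_def using char_lt1[OF D(1-4) a cc, of u v w] by (simp add: power_mult_distrib)
    also have "\<dots> \<longleftrightarrow> (u,v,w) \<in> {(c, c, 2 * c), (c, c, - 2 * c)}"
      unfolding power2_eq_iff by auto
    finally show "k \<in> {k. global_min_on E S k} \<longleftrightarrow> k \<in> {(c, c, 2 * c), (c, c, - 2 * c)}"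
      unfolding k by simp
  qed
  have P4: "{k. global_min_on E S k} =
          {((1 + \<nu>) * kb) *\<^sub>R ((cos \<phi>)^2, (sin \<phi>)^2, 2 * sin \<phi> * cos \<phi>) | \<phi>. 0 \<le> \<phi> \<and> \<phi> < pi}"
    if a: "\<alpha> = 1"
  proof (rule set_eqI)
    fix k :: voigt obtain u v w where k: "k = (u,v,w)" by (cases k) auto
    have "global_min_on E S (u,v,w) \<longleftrightarrow> (w^2 = 4 * u * v \<and> u + v = (1+\<nu>) * kb)"
      unfolding E_def S_def using char_ge1[OF D(1-3), of \<alpha> kb u v w] a by simp
    also have "\<dots> \<longleftrightarrow> (\<exists>\<phi>. (u,v,w) = ((1 + \<nu>) * kb) *\<^sub>R ((cos \<phi>)^2, (sin \<phi>)^2, 2 * sin \<phi> * cos \<phi>) \<and> 0 \<le> \<phi> \<and> \<phi> < pi)"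
      by (rule family[OF R0])
    finally show "k \<in> {k. global_min_on E S k} \<longleftrightarrow> k \<in> {((1 + \<nu>) * kb) *\<^sub>R ((cos \<phi>)^2, (sin \<phi>)^2, 2 * sin \<phi> * cos \<phi>) | \<phi>. 0 \<le> \<phi> \<and> \<phi> < pi}"
      unfolding k by blast
  qed
  have P5: "(Utilde \<nu> 1 \<alpha> (kb, kb, 0) has_real_derivative
           (sqrt (1 + \<nu>) * kb)^2 * ((bP \<nu> 1 \<alpha>)^2 - (aP \<nu> 1)^2) * sin (2 * \<theta>)
           / (2 * ((aP \<nu> 1)^2 * (cos \<theta>)^2 + (bP \<nu> 1 \<alpha>)^2 * (sin \<theta>)^2 + 1)^2)) (at \<theta>)" for \<theta>
  proof -
    have "Utilde \<nu> 1 \<alpha> (kb, kb, 0) = (\<lambda>\<theta>. (sqrt (1 + \<nu>) * kb)^2 * ((aP \<nu> 1)^2 * (cos \<theta>)^2 + (bP \<nu> 1 \<alpha>)^2 * (sin \<theta>)^2)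
        / (2 * (1 + ((aP \<nu> 1)^2 * (cos \<theta>)^2 + (bP \<nu> 1 \<alpha>)^2 * (sin \<theta>)^2))))"
      unfolding Utilde_def Tmap_kb by (intro ext Utilde_eq)
    then show ?thesis using Utilde_deriv by simp
  qed
  show ?thesis using P1 P2 P3 P4 P5 by blast
qed

end
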